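(* Let $T:X\rightrightarrows X^*$ be a monotone operator. Then $T$ is maximal pseudomonotone if and only if $T=X\times\{0\}$.
   Context: $X$ is a real Banach space with dual $X^*$ and pairing $\langle x,x^*\rangle=x^*(x)$. A multivalued operator $T:X\rightrightarrows X^*$ is identified with its graph $T\subset X\times X^*$. $T$ is monotone if $\langle x-y,x^*-y^*\rangle\ge0$ for all $(x,x^* ),(y,y^* )\in T$. $T$ is pseudomonotone if for all $(x,x^* ),(y,y^* )\in T$, $\langle y-x,x^*\rangle\ge0$ implies $\langle y-x,y^*\rangle\ge0$. $T$ is maximal pseudomonotone if it is pseudomonotone and for every pseudomonotone $S$ with $T\subset S$ one has $S=T$. *)

theory Defs
  imports "HOL-Analysis.Analysis"
begin

text \<open>A multivalued operator is identified with its graph.\<close>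

definition monotone_op :: "('a::banach \<times> ('a \<Rightarrow>\<^sub>L real)) set \<Rightarrow> bool" where
  "monotone_op T \<longleftrightarrow>
     (\<forall>x xs y ys. (x, xs) \<in> T \<longrightarrow> (y, ys) \<in> T \<longrightarrow> blinfun_apply (xs - ys) (x - y) \<ge> 0)"

definition pseudomonotone_op :: "('a::banach \<times> ('a \<Rightarrow>\<^sub>L real)) set \<Rightarrow> bool" where
  "pseudomonotone_op T \<longleftrightarrow>
     (\<forall>x xs y ys. (x, xs) \<in> T \<longrightarrow> (y, ys) \<in> T \<longrightarrow>
        blinfun_apply xs (y - x) \<ge> 0 \<longrightarrow> blinfun_apply ys (y - x) \<ge> 0)"

definition maximal_pseudomonotone_op :: "('a::banach \<times> ('a \<Rightarrow>\<^sub>L real)) set \<Rightarrow> bool" where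
  "maximal_pseudomonotone_op T \<longleftrightarrow>
     pseudomonotone_op T \<and> (\<forall>S. pseudomonotone_op S \<and> T \<subseteq> S \<longrightarrow> S = T)"

end

theory Submission
  imports Defs
begin

lemma pm_insert:
  assumes "pseudomonotone_op T"
    and "\<And>x xs. (x,xs)\<in>T \<Longrightarrow> (blinfun_apply xs (z-x) \<ge> 0 \<longrightarrow> blinfun_apply zs (z-x) \<ge> 0)
            \<and> (blinfun_apply zs (x-z) \<ge> 0 \<longrightarrow> blinfun_apply xs (x-z) \<ge> 0)"
  shows "pseudomonotone_op (insert (z,zs) T)"
  using assms unfolding pseudomonotone_op_def
  by (auto simp: blinfun.zero_right)

lemma max_insert:
  assumes "maximal_pseudomonotone_op T" "pseudomonotone_op (insert p T)"
  shows "p \<in> T"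
  using assms unfolding maximal_pseudomonotone_op_def by blast

lemma cone:
  assumes m: "maximal_pseudomonotone_op T" and y: "(y,ys) \<in> T" and t: "t > 0"
  shows "(y, t *\<^sub>R ys) \<in> T"
proof -
  have pm: "pseudomonotone_op T" using m unfolding maximal_pseudomonotone_op_def by blast
  have "pseudomonotone_op (insert (y, t *\<^sub>R ys) T)"
  proof (rule pm_insert[OF pm])
    fix x xs assume x: "(x,xs) \<in> T"
    have 1: "blinfun_apply ys (x - y) \<ge> 0 \<longrightarrow> blinfun_apply xs (x - y) \<ge> 0"
      using pm x y unfolding pseudomonotone_op_def by blast
    have 2: "blinfun_apply xs (y - x) \<ge> 0 \<longrightarrow> blinfun_apply ys (y - x) \<ge> 0"
      using pm x y unfolding pseudomonotone_op_def by blast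
    show "(blinfun_apply xs (y-x) \<ge> 0 \<longrightarrow> blinfun_apply (t *\<^sub>R ys) (y-x) \<ge> 0)
            \<and> (blinfun_apply (t *\<^sub>R ys) (x-y) \<ge> 0 \<longrightarrow> blinfun_apply xs (x-y) \<ge> 0)"
      using 1 2 t by (auto simp: blinfun.scaleR_left zero_le_mult_iff)
  qed
  then show ?thesis using max_insert[OF m] by blast
qed

lemma propP:
  assumes mono: "monotone_op T" and m: "maximal_pseudomonotone_op T"
    and x: "(x,xs) \<in> T" and y: "(y,ys) \<in> T"
  shows "blinfun_apply xs (x - y) \<ge> 0"
proof (rule ccontr)
  define a where "a = blinfun_apply xs (x - y)"
  define c where "c = blinfun_apply ys (x - y)"
  assume "\<not> blinfun_apply xs (x - y) \<ge> 0"
  hence a: "a < 0" unfolding a_def by simp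
  have mt: "\<And>t. t > 0 \<Longrightarrow> a \<ge> t * c"
  proof -
    fix t :: real assume "t > 0"
    from cone[OF m y this] have "(y, t *\<^sub>R ys) \<in> T" .
    with mono x have "blinfun_apply (xs - t *\<^sub>R ys) (x - y) \<ge> 0"
      unfolding monotone_op_def by blast
    thus "a \<ge> t * c" unfolding a_def c_def by (simp add: blinfun.diff_left blinfun.scaleR_left)
  qed
  from mt[of 1] a have c: "c < 0" by simp
  have "a \<ge> (a / (2*c)) * c" using mt[of "a/(2*c)"] a c by (simp add: divide_neg_neg)
  moreover have "(a / (2*c)) * c = a/2" using c by (simp add: field_simps)
  ultimately show False using a by simp
qed

theorem mainTheorem10:
  fixes T :: "('a::banach \<times> ('a \<Rightarrow>\<^sub>L real)) set"
  assumes "monotone_op T"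
  shows "maximal_pseudomonotone_op T \<longleftrightarrow> T = UNIV \<times> {0}"
proof
  assume m: "maximal_pseudomonotone_op T"
  have pm: "pseudomonotone_op T" using m unfolding maximal_pseudomonotone_op_def by blast
  have zero: "xs = 0" if x: "(x,xs) \<in> T" for x xs
  proof (rule ccontr)
    assume "xs \<noteq> 0"
    then obtain w where w: "blinfun_apply xs w \<noteq> 0"
      by (metis blinfun_eqI blinfun.zero_left)
    define z where "z = x + (blinfun_apply xs w) *\<^sub>R w"
    have pos: "blinfun_apply xs (z - x) > 0"
      using w unfolding z_def by (auto simp add: blinfun.scaleR_right zero_less_mult_iff mult_neg_neg linorder_neq_iff)
    have "pseudomonotone_op (insert (z, xs) T)"
    proof (rule pm_insert[OF pm])
      fix y ys assume y: "(y,ys) \<in> T"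
      have P: "blinfun_apply xs (x - y) \<ge> 0" by (rule propP[OF assms m x y])
      have e1: "blinfun_apply xs (z - y) = blinfun_apply xs (z - x) + blinfun_apply xs (x - y)"
        by (metis blinfun.add_right diff_add_cancel add_diff_eq)
      have e2: "blinfun_apply xs (y - z) = - blinfun_apply xs (z - y)"
        by (metis blinfun.minus_right minus_diff_eq)
      show "(blinfun_apply ys (z-y) \<ge> 0 \<longrightarrow> blinfun_apply xs (z-y) \<ge> 0)
            \<and> (blinfun_apply xs (y-z) \<ge> 0 \<longrightarrow> blinfun_apply ys (y-z) \<ge> 0)"
        using e1 e2 P pos by linarith
    qed
    hence zT: "(z, xs) \<in> T" using max_insert[OF m] by blast
    have "blinfun_apply xs (x - z) \<ge> 0" by (rule propP[OF assms m x zT])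
    moreover have "blinfun_apply xs (x - z) = - blinfun_apply xs (z - x)"
      by (metis blinfun.minus_right minus_diff_eq)
    ultimately show False using pos by linarith
  qed
  have all: "(z, 0) \<in> T" for z
  proof -
    have "pseudomonotone_op (insert (z, 0) T)"
      by (rule pm_insert[OF pm]) (auto dest: zero)
    thus ?thesis using max_insert[OF m] by blast
  qed
  show "T = UNIV \<times> {0}" using zero all by auto
next
  assume T: "T = UNIV \<times> {0}"
  show "maximal_pseudomonotone_op T"
    unfolding maximal_pseudomonotone_op_def
  proof (intro conjI allI impI)
    show "pseudomonotone_op T" using T unfolding pseudomonotone_op_def by auto
    fix S assume S: "pseudomonotone_op S \<and> T \<subseteq> S"
    show "S = T"
    proof
      show "T \<subseteq> S" using S by blast
      show "S \<subseteq> T"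
      proof
        fix p assume p: "p \<in> S"
        obtain x xs where px: "p = (x, xs)" by fastforce
        have ge: "blinfun_apply xs (x - y) \<ge> 0" for y
        proof -
          have "(y, 0) \<in> S" using S T by auto
          thus ?thesis using S p px unfolding pseudomonotone_op_def by fastforce
        qed
        have "blinfun_apply xs v = 0" for v
        proof -
          have "blinfun_apply xs v \<ge> 0" using ge[of "x - v"] by simp
          moreover have "blinfun_apply xs (- v) \<ge> 0" using ge[of "x + v"] by simp
          ultimately show ?thesis by (simp add: blinfun.minus_right)
        qed
        hence "xs = 0" by (intro blinfun_eqI) simp
        thus "p \<in> T" using px T by simp
      qed
    qed
  qed
qed

end
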